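(* Let $\mathcal R$ be a left-linear TRS. (1) If $t \leftarrow^{p}_{\mathcal R} s \to^{\epsilon}_{\mathcal B^\pm} u$ is a critical peak (from an overlap of a rule of $\mathcal R$ at position $p$ into a pair of $\mathcal B^\pm$), then there is a term $v$ with $t\,\nabla_s\, v$ and $v\,\tilde\nabla_s\, u$. (2) If $t \leftarrow^{p}_{\mathcal B^\pm} s \to^{\epsilon}_{\mathcal R} u$ is a critical peak (from an overlap of a pair of $\mathcal B^\pm$ at position $p$ into a rule of $\mathcal R$), then there is a term $v$ with $v\,\tilde\nabla_s\, t$ and $v\,\nabla_s\, u$.
   Context: Terms are built from a signature $\mathcal F$ and variables $\mathcal V$. A rule $\ell\to r$ is a pair of terms with $\ell\notin\mathcal V$ and $\mathrm{Var}(r)\subseteq\mathrm{Var}(\ell)$; a TRS is a set of rules, an ES a set of equations. For a set $\mathcal E$ of pairs of terms, $s\to_{\mathcal E}t$ iff $s|_p=\ell\sigma$ and $t=s[r\sigma]_p$ for some $(\ell,r)\in\mathcal E$, position $p$ and substitution $\sigma$ (written $\to^p_{\mathcal E}$ to make $p$ explicit); $\leftarrow_{\mathcal E}$ is its inverse and $\leftrightarrow_{\mathcal E}$ its symmetric closure. $\mathcal B$ is a fixed ES with $\mathrm{Var}(\ell)=\mathrm{Var}(r)$ for all $\ell\approx r\in\mathcal B$; $\sim_{\mathcal B}=\leftrightarrow^*_{\mathcal B}$ and $\mathcal B^\pm=\mathcal B\cup\{t\approx s\mid s\approx t\in\mathcal B\}$. For a TRS $\mathcal R$: $\downarrow_{\mathcal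 R}=\to^*_{\mathcal R}\cdot\leftarrow^*_{\mathcal R}$ and $s\downarrow^\sim_{\mathcal R}t$ iff $s\to^*_{\mathcal R}\cdot\sim_{\mathcal B}\cdot\leftarrow^*_{\mathcal R}t$. Critical pairs: for sets of oriented pairs $\mathcal R_1,\mathcal R_2$ (equations of $\mathcal B^\pm$ read as oriented pairs), an overlap is $\langle\ell_1\to r_1,p,\ell_2\to r_2\rangle$ with $\ell_i\to r_i$ variants of elements of $\mathcal R_i$ without common variables, $p$ a non-variable position of $\ell_2$, $\ell_1$ and $\ell_2|_p$ unifiable, and the two rules not variants of each other if $p=\epsilon$. With an mgu $\sigma$ this yields the critical peak $\ell_2\sigma[r_1\sigma]_p\leftarrow^p\ell_2\sigma\to^\epsilon r_2\sigma$ and critical pair $\ell_2\sigma[r_1\sigma]_p\approx r_2\sigma$. A critical peak $t\leftarrow^p s\to^\epsilon u$ is prime if all proper subterms of $s|_p$ are normal forms of $\to_{\mathcal R}$ (irreducibility is always checked w.r.t. $\mathcal R$, also for overlaps involving $\mathcal B^\pm$). $\mathrm{PCP}(\mathcal R)$ is the set of prime critical pairs from overlaps of $\mathcal R$ with itself; $\mathrm{PCP}^\pm(\mathcal R,\mathcal B^\pm)$ is the set of prime critical pairs from overlaps $\langle\rho_1,p,\rho_2\rangle$ with $\rho_1\in\mathcal R,\rho_2\in\mathcal B^\pm$ or $\rho_1\in\mathcal B^\pm,\rho_2\in\mathcal R$. Triangle notation: $t\,\nabla_s\,u$ iff $s\to^+_{\mathcal R}t$, $s\to^+_{\mathcal R}u$,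 and ($t\downarrow_{\mathcal R}u$ or $t\leftrightarrow_{\mathrm{PCP}(\mathcal R)}u$). $t\,\tilde\nabla_s\,u$ iff $s\to^+_{\mathcal R}t$, $s\sim_{\mathcal B}u$, and ($t\downarrow^\sim_{\mathcal R}u$ or $t\leftrightarrow_{\mathrm{PCP}^\pm(\mathcal R,\mathcal B^\pm)}u$). *)

theory Defs
  imports Main "HOL-Library.Infinite_Typeclass"
begin

datatype ('f, 'v) trm = Var 'v | Fun 'f "('f, 'v) trm list"

type_synonym pos = "nat list"
type_synonym ('f, 'v) subst = "'v \<Rightarrow> ('f, 'v) trm"

fun vars_list :: "('f, 'v) trm \<Rightarrow> 'v list" where
  "vars_list (Var x) = [x]"
| "vars_list (Fun f ts) = concat (map vars_list ts)"

definition vars :: "('f, 'v) trm \<Rightarrow> 'v set" where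
  "vars t = set (vars_list t)"

definition linear :: "('f, 'v) trm \<Rightarrow> bool" where
  "linear t = distinct (vars_list t)"

fun subst_apply :: "('f, 'v) trm \<Rightarrow> ('f, 'v) subst \<Rightarrow> ('f, 'v) trm" (infixl "\<cdot>" 67) where
  "Var x \<cdot> \<sigma> = \<sigma> x"
| "Fun f ts \<cdot> \<sigma> = Fun f (map (\<lambda>t. t \<cdot> \<sigma>) ts)"

fun is_pos :: "('f, 'v) trm \<Rightarrow> pos \<Rightarrow> bool" where
  "is_pos t [] = True"
| "is_pos (Var x) (i # p) = False"
| "is_pos (Fun f ts) (i # p) = (i < length ts \<and> is_pos (ts ! i) p)"

(* Subterm at a position (meaningful only for positions of the term). *)
fun subt_at :: "('f, 'v) trm \<Rightarrow> pos \<Rightarrow> ('f, 'v) trm" where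
  "subt_at t [] = t"
| "subt_at (Var x) (i # p) = Var x"
| "subt_at (Fun f ts) (i # p) = subt_at (ts ! i) p"

fun replace_at :: "('f, 'v) trm \<Rightarrow> pos \<Rightarrow> ('f, 'v) trm \<Rightarrow> ('f, 'v) trm" where
  "replace_at s [] t = t"
| "replace_at (Var x) (i # p) t = Var x"
| "replace_at (Fun f ts) (i # p) t = Fun f (ts[i := replace_at (ts ! i) p t])"

definition rstep_at :: "('f, 'v) trm rel \<Rightarrow> pos \<Rightarrow> ('f, 'v) trm rel" where
  "rstep_at E p = {(s, t). \<exists>l r \<sigma>. (l, r) \<in> E \<and> is_pos s p \<and>
      subt_at s p = l \<cdot> \<sigma> \<and> t = replace_at s p (r \<cdot> \<sigma>)}"

definition rstep :: "('f, 'v) trm rel \<Rightarrow> ('f, 'v) trm rel" where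
  "rstep E = (\<Union>p. rstep_at E p)"

definition conv_step :: "('f, 'v) trm rel \<Rightarrow> ('f, 'v) trm rel" where
  "conv_step E = rstep E \<union> (rstep E)\<inverse>"

definition trs :: "('f, 'v) trm rel \<Rightarrow> bool" where
  "trs R = (\<forall>(l, r) \<in> R. (\<exists>f ts. l = Fun f ts) \<and> vars r \<subseteq> vars l)"

definition left_linear :: "('f, 'v) trm rel \<Rightarrow> bool" where
  "left_linear R = (\<forall>(l, r) \<in> R. linear l)"

definition Bpm :: "('f, 'v) trm rel \<Rightarrow> ('f, 'v) trm rel" where
  "Bpm B = B \<union> B\<inverse>"

definition simB :: "('f, 'v) trm rel \<Rightarrow> ('f, 'v) trm rel" where
  "simB B = (conv_step B)\<^sup>*"

definition join :: "('f, 'v) trm rel \<Rightarrow> ('f, 'v) trm rel" where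
  "join R = (rstep R)\<^sup>* O ((rstep R)\<^sup>*)\<inverse>"

definition join_sim :: "('f, 'v) trm rel \<Rightarrow> ('f, 'v) trm rel \<Rightarrow> ('f, 'v) trm rel" where
  "join_sim R B = (rstep R)\<^sup>* O simB B O ((rstep R)\<^sup>*)\<inverse>"

definition unifies :: "('f, 'v) subst \<Rightarrow> ('f, 'v) trm \<Rightarrow> ('f, 'v) trm \<Rightarrow> bool" where
  "unifies \<sigma> s t = (s \<cdot> \<sigma> = t \<cdot> \<sigma>)"

definition is_mgu :: "('f, 'v) subst \<Rightarrow> ('f, 'v) trm \<Rightarrow> ('f, 'v) trm \<Rightarrow> bool" where
  "is_mgu \<sigma> s t = (unifies \<sigma> s t \<and>
     (\<forall>\<tau>. unifies \<tau> s t \<longrightarrow> (\<exists>\<gamma>. \<forall>x. \<tau> x = \<sigma> x \<cdot> \<gamma>)))"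

definition variant :: "('f, 'v) trm \<times> ('f, 'v) trm \<Rightarrow> ('f, 'v) trm \<times> ('f, 'v) trm \<Rightarrow> bool" where
  "variant \<rho> \<rho>' = (\<exists>\<pi>. bij \<pi> \<and> fst \<rho>' = fst \<rho> \<cdot> (Var \<circ> \<pi>) \<and> snd \<rho>' = snd \<rho> \<cdot> (Var \<circ> \<pi>))"

definition rule_vars :: "('f, 'v) trm \<times> ('f, 'v) trm \<Rightarrow> 'v set" where
  "rule_vars \<rho> = vars (fst \<rho>) \<union> vars (snd \<rho>)"

definition overlap :: "('f, 'v) trm rel \<Rightarrow> ('f, 'v) trm rel \<Rightarrow>
    ('f, 'v) trm \<times> ('f, 'v) trm \<Rightarrow> pos \<Rightarrow> ('f, 'v) trm \<times> ('f, 'v) trm \<Rightarrow> bool" where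
  "overlap R1 R2 \<rho>1 p \<rho>2 =
    ((\<exists>\<rho> \<in> R1. variant \<rho> \<rho>1) \<and> (\<exists>\<rho> \<in> R2. variant \<rho> \<rho>2) \<and>
     rule_vars \<rho>1 \<inter> rule_vars \<rho>2 = {} \<and>
     is_pos (fst \<rho>2) p \<and> (\<exists>f ts. subt_at (fst \<rho>2) p = Fun f ts) \<and>
     (\<exists>\<sigma>. unifies \<sigma> (fst \<rho>1) (subt_at (fst \<rho>2) p)) \<and>
     (p = [] \<longrightarrow> \<not> variant \<rho>1 \<rho>2))"

(* t \<leftarrow>\<^sup>p s \<rightarrow>\<^sup>\<epsilon> u is a critical peak from an overlap of R1 (at p) into R2. *)
definition crit_peak :: "('f, 'v) trm rel \<Rightarrow> ('f, 'v) trm rel \<Rightarrow>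
    ('f, 'v) trm \<Rightarrow> pos \<Rightarrow> ('f, 'v) trm \<Rightarrow> ('f, 'v) trm \<Rightarrow> bool" where
  "crit_peak R1 R2 t p s u = (\<exists>l1 r1 l2 r2 \<sigma>.
     overlap R1 R2 (l1, r1) p (l2, r2) \<and> is_mgu \<sigma> l1 (subt_at l2 p) \<and>
     s = l2 \<cdot> \<sigma> \<and> t = replace_at (l2 \<cdot> \<sigma>) p (r1 \<cdot> \<sigma>) \<and> u = r2 \<cdot> \<sigma>)"

definition NF :: "('f, 'v) trm rel \<Rightarrow> ('f, 'v) trm \<Rightarrow> bool" where
  "NF R t = (\<nexists>w. (t, w) \<in> rstep R)"

definition prime_peak :: "('f, 'v) trm rel \<Rightarrow> ('f, 'v) trm rel \<Rightarrow> ('f, 'v) trm rel \<Rightarrow>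
    ('f, 'v) trm \<Rightarrow> pos \<Rightarrow> ('f, 'v) trm \<Rightarrow> ('f, 'v) trm \<Rightarrow> bool" where
  "prime_peak R R1 R2 t p s u = (crit_peak R1 R2 t p s u \<and>
     (\<forall>q. q \<noteq> [] \<and> is_pos (subt_at s p) q \<longrightarrow> NF R (subt_at (subt_at s p) q)))"

definition PCP :: "('f, 'v) trm rel \<Rightarrow> ('f, 'v) trm rel" where
  "PCP R = {(t, u). \<exists>p s. prime_peak R R R t p s u}"

definition PCPpm :: "('f, 'v) trm rel \<Rightarrow> ('f, 'v) trm rel \<Rightarrow> ('f, 'v) trm rel" where
  "PCPpm R B = {(t, u). \<exists>p s. prime_peak R R (Bpm B) t p s u \<or> prime_peak R (Bpm B) R t p s u}"

definition nabla :: "('f, 'v) trm rel \<Rightarrow> ('f, 'v) trm \<Rightarrow> ('f, 'v) trm \<Rightarrow> ('f, 'v) trm \<Rightarrow> bool" where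
  "nabla R t s u = ((s, t) \<in> (rstep R)\<^sup>+ \<and> (s, u) \<in> (rstep R)\<^sup>+ \<and>
     ((t, u) \<in> join R \<or> (t, u) \<in> conv_step (PCP R)))"

definition nabla_tilde :: "('f, 'v) trm rel \<Rightarrow> ('f, 'v) trm rel \<Rightarrow>
    ('f, 'v) trm \<Rightarrow> ('f, 'v) trm \<Rightarrow> ('f, 'v) trm \<Rightarrow> bool" where
  "nabla_tilde R B t s u = ((s, t) \<in> (rstep R)\<^sup>+ \<and> (s, u) \<in> simB B \<and>
     ((t, u) \<in> join_sim R B \<or> (t, u) \<in> conv_step (PCPpm R B)))"

end

theory Submission
  imports Defs
begin


lemma is_pos_append: "is_pos s (p @ q) = (is_pos s p \<and> is_pos (subt_at s p) q)"
  by (induction s p rule: is_pos.induct) auto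

lemma subt_at_append: "is_pos s p \<Longrightarrow> subt_at s (p @ q) = subt_at (subt_at s p) q"
  by (induction s p rule: is_pos.induct) auto

lemma replace_at_append: "is_pos s p \<Longrightarrow>
   replace_at s (p @ q) w = replace_at s p (replace_at (subt_at s p) q w)"
  by (induction s p rule: is_pos.induct) auto

lemma subt_replace: "is_pos s p \<Longrightarrow> subt_at (replace_at s p w) p = w"
  by (induction s p rule: is_pos.induct) auto

lemma is_pos_replace: "is_pos s p \<Longrightarrow> is_pos (replace_at s p w) p"
  by (induction s p rule: is_pos.induct) auto

lemma replace_replace: "is_pos s p \<Longrightarrow> replace_at (replace_at s p w) p w' = replace_at s p w'"
  by (induction s p rule: is_pos.induct) auto

lemma replace_subt: "is_pos s p \<Longrightarrow> replace_at s p (subt_at s p) = s"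
  by (induction s p rule: is_pos.induct) auto

lemma is_pos_subst: "is_pos t p \<Longrightarrow> is_pos (t \<cdot> \<sigma>) p"
  by (induction t p rule: is_pos.induct) auto

lemma subt_subst: "is_pos t p \<Longrightarrow> subt_at (t \<cdot> \<sigma>) p = subt_at t p \<cdot> \<sigma>"
  by (induction t p rule: is_pos.induct) auto

lemma replace_subst: "is_pos t p \<Longrightarrow> replace_at t p w \<cdot> \<sigma> = replace_at (t \<cdot> \<sigma>) p (w \<cdot> \<sigma>)"
  by (induction t p rule: is_pos.induct) (auto simp: map_update)

lemma pos_subst_cases: "is_pos (t \<cdot> \<sigma>) p \<Longrightarrow>
   (is_pos t p \<and> (\<exists>f ts. subt_at t p = Fun f ts)) \<or>
   (\<exists>q1 q2 x. p = q1 @ q2 \<and> is_pos t q1 \<and> subt_at t q1 = Var x \<and> is_pos (\<sigma> x) q2)"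
proof (induction t arbitrary: p)
  case (Var x)
  then show ?case by force
next
  case (Fun f ts)
  show ?case
  proof (cases p)
    case Nil
    then show ?thesis by auto
  next
    case (Cons i p')
    with Fun.prems have i: "i < length ts" and ip: "is_pos (ts ! i \<cdot> \<sigma>) p'" by auto
    from i have "ts ! i \<in> set ts" by simp
    from Fun.IH[OF this ip] show ?thesis
    proof
      assume "is_pos (ts ! i) p' \<and> (\<exists>f ts'. subt_at (ts ! i) p' = Fun f ts')"
      then show ?thesis using i Cons by auto
    next
      assume "\<exists>q1 q2 x. p' = q1 @ q2 \<and> is_pos (ts ! i) q1 \<and> subt_at (ts ! i) q1 = Var x \<and> is_pos (\<sigma> x) q2"
      then obtain q1 q2 x where "p' = q1 @ q2" "is_pos (ts ! i) q1" "subt_at (ts ! i) q1 = Var x" "is_pos (\<sigma> x) q2" by blast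
      then show ?thesis using i Cons
        by (intro disjI2 exI[of _ "i # q1"] exI[of _ q2] exI[of _ x]) auto
    qed
  qed
qed

lemma subst_subst: "t \<cdot> \<sigma> \<cdot> \<tau> = t \<cdot> (\<lambda>x. \<sigma> x \<cdot> \<tau>)"
  by (induction t) auto

lemma subst_Var[simp]: "t \<cdot> Var = t"
  by (induction t) (auto simp: map_idI)

lemma vars_Var[simp]: "vars (Var x) = {x}" by (simp add: vars_def)
lemma vars_Fun[simp]: "vars (Fun f ts) = (\<Union>t\<in>set ts. vars t)" by (simp add: vars_def)
lemma finite_vars[simp]: "finite (vars t)" by (simp add: vars_def)

lemma subst_cong: "(\<And>x. x \<in> vars t \<Longrightarrow> \<sigma> x = \<tau> x) \<Longrightarrow> t \<cdot> \<sigma> = t \<cdot> \<tau>"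
  by (induction t) auto

lemma vars_subst: "vars (t \<cdot> \<sigma>) = (\<Union>x\<in>vars t. vars (\<sigma> x))"
  by (induction t) auto

lemma subt_at_vars: "is_pos t p \<Longrightarrow> vars (subt_at t p) \<subseteq> vars t"
  by (induction t p rule: is_pos.induct) (auto, meson nth_mem subsetD)

lemma rstep_ctxt: assumes "(a, b) \<in> rstep E" "is_pos s p"
  shows "(replace_at s p a, replace_at s p b) \<in> rstep E"
proof -
  from assms(1) obtain q l r \<sigma> where lr: "(l, r) \<in> E" "is_pos a q" "subt_at a q = l \<cdot> \<sigma>"
    "b = replace_at a q (r \<cdot> \<sigma>)" unfolding rstep_def rstep_at_def by blast
  have "(replace_at s p a, replace_at s p b) \<in> rstep_at E (p @ q)"
    unfolding rstep_at_def using lr assms(2)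
    by (auto simp: is_pos_append subt_replace is_pos_replace subt_at_append replace_at_append replace_replace)
  then show ?thesis unfolding rstep_def by blast
qed

lemma rsteps_ctxt: assumes "(a, b) \<in> (rstep E)\<^sup>*" "is_pos s p"
  shows "(replace_at s p a, replace_at s p b) \<in> (rstep E)\<^sup>*"
  using assms(1)
proof induction
  case (step y z)
  then show ?case using rstep_ctxt[OF step(2) assms(2)] by (meson rtrancl.simps)
qed simp

lemma rstep_subst: assumes "(a, b) \<in> rstep E" shows "(a \<cdot> \<gamma>, b \<cdot> \<gamma>) \<in> rstep E"
proof -
  from assms obtain q l r \<sigma> where lr: "(l, r) \<in> E" "is_pos a q" "subt_at a q = l \<cdot> \<sigma>"
    "b = replace_at a q (r \<cdot> \<sigma>)" unfolding rstep_def rstep_at_def by blast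
  have "(a \<cdot> \<gamma>, b \<cdot> \<gamma>) \<in> rstep_at E q"
    unfolding rstep_at_def using lr
    by (intro CollectI case_prodI exI[of _ l] exI[of _ r] exI[of _ "\<lambda>x. \<sigma> x \<cdot> \<gamma>"])
      (auto simp: is_pos_subst subt_subst replace_subst subst_subst)
  then show ?thesis unfolding rstep_def by blast
qed

lemma rstep_root: "(l, r) \<in> E \<Longrightarrow> (l \<cdot> \<sigma>, r \<cdot> \<sigma>) \<in> rstep E"
  unfolding rstep_def rstep_at_def by (rule UN_I[of "[]"]) auto

lemma rstep_variant: assumes "\<rho> \<in> E" "variant \<rho> (l, r)" shows "(l \<cdot> \<sigma>, r \<cdot> \<sigma>) \<in> rstep E"
proof -
  from assms(2) obtain \<pi> where "l = fst \<rho> \<cdot> (Var \<circ> \<pi>)" "r = snd \<rho> \<cdot> (Var \<circ> \<pi>)"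
    unfolding variant_def by auto
  then have "l \<cdot> \<sigma> = fst \<rho> \<cdot> (\<lambda>x. (Var \<circ> \<pi>) x \<cdot> \<sigma>)" "r \<cdot> \<sigma> = snd \<rho> \<cdot> (\<lambda>x. (Var \<circ> \<pi>) x \<cdot> \<sigma>)"
    by (auto simp: subst_subst)
  with rstep_root[of "fst \<rho>" "snd \<rho>" E] assms(1) show ?thesis by auto
qed

lemma rsteps_arg: assumes "(a, b) \<in> (rstep E)\<^sup>*"
  shows "(Fun f (xs @ a # ys), Fun f (xs @ b # ys)) \<in> (rstep E)\<^sup>*"
proof -
  have pos: "is_pos (Fun f (xs @ a # ys)) [length xs]" by simp
  from rsteps_ctxt[OF assms pos] show ?thesis by (simp add: list_update_append)
qed

lemma rsteps_args: "list_all2 (\<lambda>a b. (a, b) \<in> (rstep E)\<^sup>*) ss ts \<Longrightarrow>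
   (Fun f (xs @ ss), Fun f (xs @ ts)) \<in> (rstep E)\<^sup>*"
proof (induction ss ts arbitrary: xs rule: list_all2_induct)
  case Nil
  then show ?case by simp
next
  case (Cons s ss t ts)
  have "(Fun f (xs @ s # ss), Fun f (xs @ t # ss)) \<in> (rstep E)\<^sup>*" by (rule rsteps_arg[OF Cons(1)])
  moreover have "(Fun f ((xs @ [t]) @ ss), Fun f ((xs @ [t]) @ ts)) \<in> (rstep E)\<^sup>*" using Cons(3) .
  ultimately show ?case by simp
qed

lemma rsteps_subst_var: "(\<And>x. (\<sigma> x, \<tau> x) \<in> (rstep E)\<^sup>*) \<Longrightarrow> (t \<cdot> \<sigma>, t \<cdot> \<tau>) \<in> (rstep E)\<^sup>*"
proof (induction t)
  case (Var x)
  then show ?case by simp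
next
  case (Fun f ts)
  have "list_all2 (\<lambda>a b. (a, b) \<in> (rstep E)\<^sup>*) (map (\<lambda>t. t \<cdot> \<sigma>) ts) (map (\<lambda>t. t \<cdot> \<tau>) ts)"
    using Fun by (auto simp: list_all2_conv_all_nth)
  from rsteps_args[OF this, of f "[]"] show ?case by simp
qed

lemma replace_var_rsteps: "is_pos l q \<Longrightarrow> subt_at l q = Var x \<Longrightarrow> (\<sigma> x, a) \<in> (rstep E)\<^sup>* \<Longrightarrow>
  (replace_at (l \<cdot> \<sigma>) q a, l \<cdot> (\<sigma>(x := a))) \<in> (rstep E)\<^sup>*"
proof (induction l arbitrary: q)
  case (Var y)
  then show ?case by (cases q) auto
next
  case (Fun f ls)
  then obtain i q' where q: "q = i # q'" by (cases q) auto
  with Fun.prems have i: "i < length ls" and ip: "is_pos (ls ! i) q'" and sv: "subt_at (ls ! i) q' = Var x" by auto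
  have IH: "(replace_at (ls ! i \<cdot> \<sigma>) q' a, ls ! i \<cdot> (\<sigma>(x := a))) \<in> (rstep E)\<^sup>*"
    using Fun.IH[OF _ ip sv Fun.prems(3)] i by (simp add: fun_upd_def)
  have vs: "(t \<cdot> \<sigma>, t \<cdot> (\<sigma>(x := a))) \<in> (rstep E)\<^sup>*" for t
    by (rule rsteps_subst_var) (use Fun.prems(3) in auto)
  have "list_all2 (\<lambda>a b. (a, b) \<in> (rstep E)\<^sup>*) ((map (\<lambda>t. t \<cdot> \<sigma>) ls)[i := replace_at (ls ! i \<cdot> \<sigma>) q' a])
     (map (\<lambda>t. t \<cdot> (\<sigma>(x := a))) ls)"
    using IH i vs by (auto simp: list_all2_conv_all_nth nth_list_update)
  from rsteps_args[OF this, of f "[]"] show ?case using q i by (simp add: fun_upd_def)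
qed



definition unif_list :: "('f, 'v) subst \<Rightarrow> (('f, 'v) trm \<times> ('f, 'v) trm) list \<Rightarrow> bool" where
  "unif_list \<sigma> E = (\<forall>(a, b) \<in> set E. a \<cdot> \<sigma> = b \<cdot> \<sigma>)"

definition varsE :: "(('f, 'v) trm \<times> ('f, 'v) trm) list \<Rightarrow> 'v set" where
  "varsE E = (\<Union>(a, b) \<in> set E. vars a \<union> vars b)"

fun tsize :: "('f, 'v) trm \<Rightarrow> nat" where
  "tsize (Var x) = 1"
| "tsize (Fun f ts) = Suc (sum_list (map tsize ts))"

definition sizeE :: "(('f, 'v) trm \<times> ('f, 'v) trm) list \<Rightarrow> nat" where
  "sizeE E = sum_list (map (\<lambda>(a, b). tsize a + tsize b) E)"

definition is_mgu_list where
  "is_mgu_list \<sigma> E = (unif_list \<sigma> E \<and> (\<forall>\<tau>. unif_list \<tau> E \<longrightarrow> (\<exists>\<gamma>. \<forall>x. \<tau> x = \<sigma> x \<cdot> \<gamma>)))"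

lemma finite_varsE[simp]: "finite (varsE E)"
  by (auto simp: varsE_def)

lemma tsize_pos: "tsize t > 0" by (cases t) auto

lemma occurs_le: "x \<in> vars b \<Longrightarrow> tsize (\<tau> x) \<le> tsize (b \<cdot> \<tau>)"
proof (induction b)
  case (Var y) then show ?case by simp
next
  case (Fun f ts)
  then obtain t where t: "t \<in> set ts" "x \<in> vars t" by auto
  then have "tsize (\<tau> x) \<le> tsize (t \<cdot> \<tau>)" using Fun.IH by blast
  also have "tsize (t \<cdot> \<tau>) \<le> sum_list (map tsize (map (\<lambda>t. t \<cdot> \<tau>) ts))"
    using t(1) by (intro member_le_sum_list) auto
  finally show ?case by simp
qed

lemma occurs_lt: "x \<in> vars b \<Longrightarrow> b \<noteq> Var x \<Longrightarrow> tsize (\<tau> x) < tsize (b \<cdot> \<tau>)"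
proof (cases b)
  case (Var y) then show "x \<in> vars b \<Longrightarrow> b \<noteq> Var x \<Longrightarrow> ?thesis" by simp
next
  case (Fun f ts)
  assume "x \<in> vars b"
  then obtain t where t: "t \<in> set ts" "x \<in> vars t" using Fun by auto
  then have "tsize (\<tau> x) \<le> tsize (t \<cdot> \<tau>)" by (intro occurs_le)
  also have "tsize (t \<cdot> \<tau>) \<le> sum_list (map tsize (map (\<lambda>t. t \<cdot> \<tau>) ts))"
    using t(1) by (intro member_le_sum_list) auto
  finally show ?thesis using Fun by simp
qed

lemma map_eq_zip: "length as = length bs \<Longrightarrow>
  (map h as = map h bs) = (\<forall>(a, b) \<in> set (zip as bs). h a = h b)"
  by (induction as bs rule: list_induct2) auto

lemma sizeE_zip: "length as = length bs \<Longrightarrow>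
  sizeE (zip as bs) = sum_list (map tsize as) + sum_list (map tsize bs)"
  by (induction as bs rule: list_induct2) (auto simp: sizeE_def)

lemma varsE_zip: "varsE (zip as bs) \<subseteq> (\<Union>t\<in>set as. vars t) \<union> (\<Union>t\<in>set bs. vars t)"
  by (auto simp: varsE_def dest: set_zip_leftD set_zip_rightD)

lemma vars_elim: "vars (c \<cdot> (Var(x := b))) \<subseteq> (vars c - {x}) \<union> vars b"
  by (auto simp: vars_subst split: if_splits)

lemma mgu_list_exists:
  "unif_list \<tau> E \<Longrightarrow> \<exists>\<sigma>. is_mgu_list \<sigma> E"
proof (induction E arbitrary: \<tau> rule: wf_induct_rule[OF wf_measures[of "[\<lambda>E. card (varsE E), sizeE]"]])
  case (1 E)
  note IH = "1.IH"
  show ?case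
  proof (cases E)
    case Nil
    have "is_mgu_list Var E" unfolding is_mgu_list_def unif_list_def Nil
      by (auto intro: exI[of _ "\<tau>'" for \<tau>'])
    then show ?thesis by blast
  next
    case (Cons ab E')
    obtain a b where ab: "ab = (a, b)" by fastforce
    have card_le: "card (varsE E') \<le> card (varsE E)"
      by (rule card_mono) (auto simp: Cons ab varsE_def)
    have sz: "sizeE E' < sizeE E" using tsize_pos[of a] by (auto simp: Cons ab sizeE_def)
    consider (eq) "a = b" | (var) x c where "x \<notin> vars c"
        "\<And>\<sigma>. unif_list \<sigma> E = unif_list \<sigma> ((Var x, c) # E')" "varsE E = varsE ((Var x, c) # E')"
      | (func) f as g bs where "a = Fun f as" "b = Fun g bs"
    proof -
      have occ: False if "x \<in> vars c" "c \<noteq> Var x" "Var x \<cdot> \<tau> = c \<cdot> \<tau>" for x c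
        using occurs_lt[OF that(1,2), of \<tau>] that(3) by simp
      have u: "a \<cdot> \<tau> = b \<cdot> \<tau>" using "1.prems" by (auto simp: unif_list_def Cons ab)
      show thesis
      proof (cases "a = b")
        case True then show ?thesis using that(1) by blast
      next
        case False
        show ?thesis
        proof (cases a)
          case (Var x)
          have "x \<notin> vars b" using occ[of x b] u False Var by auto
          then show ?thesis using that(2)[of x b] Var by (auto simp: Cons ab unif_list_def varsE_def)
        next
          case (Fun f as)
          show ?thesis
          proof (cases b)
            case (Var x)
            have "x \<notin> vars a" using occ[of x a] u False Var by auto
            moreover have "unif_list \<sigma> E = unif_list \<sigma> ((Var x, a) # E')" for \<sigma>
              using Var by (auto simp: Cons ab unif_list_def)
            moreover have "varsE E = varsE ((Var x, a) # E')"
              using Var by (auto simp: Cons ab varsE_def)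
            ultimately show ?thesis using that(2)[of x a] by blast
          next
            case (Fun g bs)
            then show ?thesis using that(3) \<open>a = Fun f as\<close> by blast
          qed
        qed
      qed
    qed
    then show ?thesis
    proof cases
      case eq
      have "unif_list \<tau> E'" using "1.prems" by (auto simp: unif_list_def Cons)
      moreover have "(E', E) \<in> measures [\<lambda>E. card (varsE E), sizeE]"
        using card_le sz by auto
      ultimately obtain \<sigma> where "is_mgu_list \<sigma> E'" using IH by blast
      then have "is_mgu_list \<sigma> E" using eq by (auto simp: is_mgu_list_def unif_list_def Cons ab)
      then show ?thesis by blast
    next
      case (var x c)
      define \<epsilon> where "\<epsilon> = Var(x := c)"
      define E2 where "E2 = map (\<lambda>(s, t). (s \<cdot> \<epsilon>, t \<cdot> \<epsilon>)) E'"
      have eps: "s \<cdot> \<epsilon> \<cdot> \<tau>' = s \<cdot> \<tau>'" if "\<tau>' x = c \<cdot> \<tau>'" for s \<tau>'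
        unfolding subst_subst by (rule subst_cong) (use that in \<open>auto simp: \<epsilon>_def\<close>)
      have u2: "unif_list \<tau>' E2" if "unif_list \<tau>' E" for \<tau>'
      proof -
        from that var(2) have "\<tau>' x = c \<cdot> \<tau>'" "unif_list \<tau>' E'" by (auto simp: unif_list_def)
        then show ?thesis using eps[of \<tau>'] by (auto simp: unif_list_def E2_def)
      qed
      have "varsE E2 \<subseteq> varsE E - {x}"
        using vars_elim[of _ x c] var(1,3) unfolding E2_def varsE_def \<epsilon>_def by fastforce
      moreover have "x \<in> varsE E" using var(3) by (auto simp: varsE_def)
      ultimately have "card (varsE E2) < card (varsE E)"
        by (intro psubset_card_mono) auto
      then have "(E2, E) \<in> measures [\<lambda>E. card (varsE E), sizeE]" by auto
      then obtain \<theta> where \<theta>: "is_mgu_list \<theta> E2" using IH u2 "1.prems" by blast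
      define \<sigma> where "\<sigma> = (\<lambda>y. \<epsilon> y \<cdot> \<theta>)"
      have s1: "s \<cdot> \<sigma> = s \<cdot> \<epsilon> \<cdot> \<theta>" for s by (simp add: subst_subst \<sigma>_def)
      have "unif_list \<sigma> ((Var x, c) # E')"
      proof -
        have "c \<cdot> \<epsilon> = c" using var(1) by (intro subst_cong[of c \<epsilon> Var, simplified]) (auto simp: \<epsilon>_def)
        then have "c \<cdot> \<sigma> = c \<cdot> \<theta>" using s1[of c] by simp
        moreover have "Var x \<cdot> \<sigma> = c \<cdot> \<theta>" by (simp add: \<sigma>_def \<epsilon>_def)
        ultimately have "Var x \<cdot> \<sigma> = c \<cdot> \<sigma>" by simp
        moreover have "unif_list \<sigma> E'" using \<theta> by (auto simp: is_mgu_list_def unif_list_def E2_def s1)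
        ultimately show ?thesis by (auto simp: unif_list_def)
      qed
      moreover have "\<exists>\<gamma>. \<forall>y. \<tau>' y = \<sigma> y \<cdot> \<gamma>" if "unif_list \<tau>' E" for \<tau>'
      proof -
        from that var(2) have tx: "\<tau>' x = c \<cdot> \<tau>'" by (auto simp: unif_list_def)
        from \<theta> u2[OF that] obtain \<gamma> where g: "\<And>y. \<tau>' y = \<theta> y \<cdot> \<gamma>" by (auto simp: is_mgu_list_def)
        have "\<sigma> y \<cdot> \<gamma> = \<tau>' y" for y
        proof -
          have "\<sigma> y \<cdot> \<gamma> = \<epsilon> y \<cdot> (\<lambda>z. \<theta> z \<cdot> \<gamma>)" by (simp add: \<sigma>_def subst_subst)
          also have "\<dots> = \<epsilon> y \<cdot> \<tau>'" using g by (metis ext)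
          also have "\<dots> = Var y \<cdot> \<epsilon> \<cdot> \<tau>'" by simp
          also have "\<dots> = \<tau>' y" using eps[OF tx, of "Var y"] by simp
          finally show ?thesis .
        qed
        then show ?thesis by metis
      qed
      ultimately show ?thesis using var(2) by (auto simp: is_mgu_list_def)
    next
      case (func f as g bs)
      have u: "a \<cdot> \<tau> = b \<cdot> \<tau>" using "1.prems" by (auto simp: unif_list_def Cons ab)
      then have fg: "f = g" "length as = length bs" using func by (auto dest: map_eq_imp_length_eq)
      define E2 where "E2 = zip as bs @ E'"
      have ueq: "unif_list \<sigma> E2 = unif_list \<sigma> E" for \<sigma>
        using map_eq_zip[OF fg(2), of "\<lambda>t. t \<cdot> \<sigma>"] func fg
        by (auto simp: unif_list_def E2_def Cons ab)
      have "varsE E2 \<subseteq> varsE E"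
        using varsE_zip[of as bs] func by (auto simp: E2_def Cons ab varsE_def)
      then have "card (varsE E2) \<le> card (varsE E)" by (intro card_mono) auto
      moreover have "sizeE E2 < sizeE E"
        using sizeE_zip[OF fg(2)] func by (simp add: E2_def Cons ab sizeE_def)
      ultimately have "(E2, E) \<in> measures [\<lambda>E. card (varsE E), sizeE]" by auto
      then obtain \<sigma> where "is_mgu_list \<sigma> E2" using IH ueq "1.prems" by blast
      then show ?thesis using ueq by (auto simp: is_mgu_list_def)
    qed
  qed
qed

lemma mgu_exists: "unifies \<tau> s t \<Longrightarrow> \<exists>\<sigma>. is_mgu \<sigma> s t"
  using mgu_list_exists[of \<tau> "[(s, t)]"]
  by (auto simp: is_mgu_list_def is_mgu_def unif_list_def unifies_def)



lemma rename_away: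
  fixes A V :: "'v :: infinite set"
  assumes "finite A" "finite V"
  shows "\<exists>\<pi>. bij \<pi> \<and> \<pi> ` A \<inter> V = {}"
proof -
  have "infinite (UNIV - (V \<union> A))" using assms infinite_UNIV by auto
  then obtain B where B: "finite B" "card B = card A" "B \<subseteq> UNIV - (V \<union> A)"
    using infinite_arbitrarily_large by blast
  then obtain g where g: "bij_betw g A B" using finite_same_card_bij[OF assms(1) B(1)] by auto
  define \<pi> where "\<pi> z = (if z \<in> A then g z else if z \<in> B then inv_into A g z else z)" for z
  have AB: "A \<inter> B = {}" using B by auto
  have inv: "\<pi> (\<pi> z) = z" for z
  proof -
    consider "z \<in> A" | "z \<in> B" | "z \<notin> A" "z \<notin> B" by blast
    then show ?thesis
    proof cases
      case 1
      then have "g z \<in> B" using g by (auto simp: bij_betw_def)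
      then show ?thesis using 1 AB g by (auto simp: \<pi>_def bij_betw_def)
    next
      case 2
      then have "z \<in> g ` A" using g by (auto simp: bij_betw_def)
      then have "inv_into A g z \<in> A" "g (inv_into A g z) = z" by (auto intro: inv_into_into f_inv_into_f)
      then show ?thesis using 2 AB by (auto simp: \<pi>_def)
    next
      case 3
      then show ?thesis by (auto simp: \<pi>_def)
    qed
  qed
  have "bij \<pi>" by (rule o_bij[of \<pi>]) (auto simp: inv fun_eq_iff)
  moreover have "\<pi> ` A \<inter> V = {}" using g B by (auto simp: \<pi>_def bij_betw_def)
  ultimately show ?thesis by blast
qed

lemma vars_rename: "vars (t \<cdot> (Var \<circ> \<pi>)) = \<pi> ` vars t"
  by (auto simp: vars_subst)

lemma rename_inv: "bij \<pi> \<Longrightarrow> t \<cdot> (Var \<circ> \<pi>) \<cdot> (\<lambda>z. \<sigma> (inv \<pi> z)) = t \<cdot> \<sigma>"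
  by (simp add: subst_subst bij_is_inj)

lemma NF_subst: "NF R (w \<cdot> \<gamma>) \<Longrightarrow> NF R w"
  unfolding NF_def using rstep_subst by blast

lemma cp_inst:
  fixes R E :: "('f, 'v :: infinite) trm rel"
  assumes rho: "\<exists>\<rho>\<in>E. variant \<rho> (l, r)"
  and q: "is_pos l q" "q \<noteq> []" "subt_at l q = Fun f ts"
  and l3: "(l3, r3) \<in> R" "subt_at (l \<cdot> \<sigma>) q = l3 \<cdot> \<sigma>3"
  and nf: "\<forall>q'. q' \<noteq> [] \<and> is_pos (l3 \<cdot> \<sigma>3) q' \<longrightarrow> NF R (subt_at (l3 \<cdot> \<sigma>3) q')"
  shows "\<exists>t' s' u' \<gamma>. prime_peak R R E t' q s' u' \<and>
     t' \<cdot> \<gamma> = replace_at (l \<cdot> \<sigma>) q (r3 \<cdot> \<sigma>3) \<and> u' \<cdot> \<gamma> = r \<cdot> \<sigma>"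
proof -
  obtain \<pi> where \<pi>: "bij \<pi>" "\<pi> ` rule_vars (l3, r3) \<inter> rule_vars (l, r) = {}"
    using rename_away[of "rule_vars (l3, r3)" "rule_vars (l, r)"] by (auto simp: rule_vars_def)
  define l3' where "l3' = l3 \<cdot> (Var \<circ> \<pi>)"
  define r3' where "r3' = r3 \<cdot> (Var \<circ> \<pi>)"
  have var3: "variant (l3, r3) (l3', r3')" using \<pi> by (auto simp: variant_def l3'_def r3'_def)
  have rv3: "rule_vars (l3', r3') = \<pi> ` rule_vars (l3, r3)"
    by (auto simp: rule_vars_def l3'_def r3'_def vars_rename)
  define \<tau> where "\<tau> z = \<sigma>3 (inv \<pi> z)" for z
  have l3t: "l3' \<cdot> \<tau> = l3 \<cdot> \<sigma>3" and r3t: "r3' \<cdot> \<tau> = r3 \<cdot> \<sigma>3"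
    using rename_inv[OF \<pi>(1), of _ \<sigma>3] unfolding l3'_def r3'_def
    by (auto simp: \<tau>_def[abs_def])
  define \<theta> where "\<theta> z = (if z \<in> rule_vars (l3', r3') then \<tau> z else \<sigma> z)" for z
  have l3th: "l3' \<cdot> \<theta> = l3 \<cdot> \<sigma>3" using l3t
    by (metis (mono_tags, lifting) UnCI \<theta>_def fst_conv rule_vars_def subst_cong)
  have r3th: "r3' \<cdot> \<theta> = r3 \<cdot> \<sigma>3" using r3t
    by (metis (mono_tags, lifting) UnCI \<theta>_def snd_conv rule_vars_def subst_cong)
  have lth: "l \<cdot> \<theta> = l \<cdot> \<sigma>" using \<pi>(2) rv3
    by (intro subst_cong) (auto simp: \<theta>_def rule_vars_def)
  have rth: "r \<cdot> \<theta> = r \<cdot> \<sigma>" using \<pi>(2) rv3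
    by (intro subst_cong) (auto simp: \<theta>_def rule_vars_def)
  have sth: "subt_at l q \<cdot> \<theta> = subt_at l q \<cdot> \<sigma>"
    using \<pi>(2) rv3 subt_at_vars[OF q(1)]
    by (intro subst_cong) (auto simp: \<theta>_def rule_vars_def)
  have unif: "unifies \<theta> l3' (subt_at l q)"
    unfolding unifies_def using l3th sth l3(2) subt_subst[OF q(1)] by simp
  obtain \<mu> where mu: "is_mgu \<mu> l3' (subt_at l q)" using mgu_exists[OF unif] by blast
  then obtain \<gamma> where g: "\<And>x. \<theta> x = \<mu> x \<cdot> \<gamma>" using unif by (auto simp: is_mgu_def)
  have tg: "t \<cdot> \<mu> \<cdot> \<gamma> = t \<cdot> \<theta>" for t
    by (simp add: subst_subst g[symmetric])
  have ov: "overlap R E (l3', r3') q (l, r)"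
    unfolding overlap_def using var3 l3(1) rho \<pi>(2) rv3 q unif by auto
  define t' where "t' = replace_at (l \<cdot> \<mu>) q (r3' \<cdot> \<mu>)"
  have cp: "crit_peak R E t' q (l \<cdot> \<mu>) (r \<cdot> \<mu>)"
    unfolding crit_peak_def using ov mu t'_def by blast
  have sq: "subt_at (l \<cdot> \<mu>) q = l3' \<cdot> \<mu>"
    using subt_subst[OF q(1), of \<mu>] mu by (simp add: is_mgu_def unifies_def)
  have nf': "NF R (subt_at (subt_at (l \<cdot> \<mu>) q) q')" if "q' \<noteq> []" "is_pos (subt_at (l \<cdot> \<mu>) q) q'" for q'
  proof -
    have p: "is_pos (l3' \<cdot> \<mu>) q'" using that sq by simp
    have "is_pos (l3 \<cdot> \<sigma>3) q'" using is_pos_subst[OF p, of \<gamma>] tg l3th by simp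
    then have "NF R (subt_at (l3 \<cdot> \<sigma>3) q')" using nf that(1) by blast
    moreover have "subt_at (l3 \<cdot> \<sigma>3) q' = subt_at (l3' \<cdot> \<mu>) q' \<cdot> \<gamma>"
      using subt_subst[OF p, of \<gamma>] tg l3th by simp
    ultimately show ?thesis using NF_subst sq by metis
  qed
  have pp: "prime_peak R R E t' q (l \<cdot> \<mu>) (r \<cdot> \<mu>)"
    unfolding prime_peak_def using cp nf' by blast
  have "t' \<cdot> \<gamma> = replace_at (l \<cdot> \<sigma>) q (r3 \<cdot> \<sigma>3)"
    unfolding t'_def using replace_subst[OF is_pos_subst[OF q(1)], of \<mu>] tg lth r3th by simp
  moreover have "r \<cdot> \<mu> \<cdot> \<gamma> = r \<cdot> \<sigma>" using tg rth by simp
  ultimately show ?thesis using pp by blast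
qed



lemma tsize_subt: "is_pos t p \<Longrightarrow> tsize (subt_at t p) \<le> tsize t"
proof (induction t p rule: is_pos.induct)
  case (3 f ts i p)
  then have "tsize (subt_at (ts ! i) p) \<le> tsize (ts ! i)" by simp
  also have "\<dots> \<le> sum_list (map tsize ts)" using 3 by (intro member_le_sum_list) auto
  finally show ?case by simp
qed auto

lemma tsize_subt_lt: "is_pos t p \<Longrightarrow> p \<noteq> [] \<Longrightarrow> tsize (subt_at t p) < tsize t"
proof -
  assume a: "is_pos t p" "p \<noteq> []"
  then obtain i p' where p: "p = i # p'" by (cases p) auto
  with a obtain f ts where t: "t = Fun f ts" by (cases t) auto
  with a p have i: "i < length ts" "is_pos (ts ! i) p'" by auto
  have "tsize (subt_at (ts ! i) p') \<le> tsize (ts ! i)" by (rule tsize_subt[OF i(2)])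
  also have "\<dots> \<le> sum_list (map tsize ts)" using i by (intro member_le_sum_list) auto
  finally show ?thesis using t p by simp
qed

lemma innermost: "(a, w) \<in> rstep R \<Longrightarrow> \<exists>q l3 r3 \<sigma>3. is_pos a q \<and> (l3, r3) \<in> R \<and> subt_at a q = l3 \<cdot> \<sigma>3 \<and>
   (\<forall>q'. q' \<noteq> [] \<and> is_pos (l3 \<cdot> \<sigma>3) q' \<longrightarrow> NF R (subt_at (l3 \<cdot> \<sigma>3) q'))"
proof (induction a arbitrary: w rule: measure_induct_rule[of tsize])
  case (less a)
  from less.prems obtain q0 l r \<sigma> where lr: "(l, r) \<in> R" "is_pos a q0" "subt_at a q0 = l \<cdot> \<sigma>"
    unfolding rstep_def rstep_at_def by blast
  show ?case
  proof (cases "\<forall>q'. q' \<noteq> [] \<and> is_pos (l \<cdot> \<sigma>) q' \<longrightarrow> NF R (subt_at (l \<cdot> \<sigma>) q')")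
    case True
    then show ?thesis using lr by blast
  next
    case False
    then obtain q' w' where q': "q' \<noteq> []" "is_pos (l \<cdot> \<sigma>) q'" "(subt_at (l \<cdot> \<sigma>) q', w') \<in> rstep R"
      unfolding NF_def by blast
    define b where "b = subt_at a (q0 @ q')"
    have bb: "b = subt_at (l \<cdot> \<sigma>) q'" using lr by (simp add: b_def subt_at_append)
    have "tsize b < tsize (l \<cdot> \<sigma>)" using bb tsize_subt_lt[OF q'(2,1)] by simp
    also have "\<dots> \<le> tsize a" using tsize_subt[OF lr(2)] lr(3) by simp
    finally have "tsize b < tsize a" .
    from less.IH[OF this, of w'] q'(3) bb obtain q l3 r3 \<sigma>3 where
      r: "is_pos b q" "(l3, r3) \<in> R" "subt_at b q = l3 \<cdot> \<sigma>3"
         "\<forall>q'. q' \<noteq> [] \<and> is_pos (l3 \<cdot> \<sigma>3) q' \<longrightarrow> NF R (subt_at (l3 \<cdot> \<sigma>3) q')" by blast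
    have "is_pos a (q0 @ q' @ q)" using lr q' r bb by (simp add: is_pos_append subt_at_append)
    moreover have "subt_at a (q0 @ q' @ q) = l3 \<cdot> \<sigma>3" using lr q' r bb
      by (simp add: is_pos_append subt_at_append)
    ultimately show ?thesis using r by blast
  qed
qed

definition PP :: "('f, 'v) trm rel \<Rightarrow> ('f, 'v) trm rel \<Rightarrow> ('f, 'v) trm rel" where
  "PP R E = {(t, u). \<exists>p s. prime_peak R R E t p s u}"

lemma outer:
  fixes R E :: "('f, 'v :: infinite) trm rel"
  assumes rho: "\<exists>\<rho>\<in>E. variant \<rho> (l, r)"
  and sp: "is_pos s p" "subt_at s p = l \<cdot> \<sigma>"
  and q: "is_pos (l \<cdot> \<sigma>) q" "q \<noteq> []"
  and l3: "(l3, r3) \<in> R" "subt_at (l \<cdot> \<sigma>) q = l3 \<cdot> \<sigma>3"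
  and nf: "\<forall>q'. q' \<noteq> [] \<and> is_pos (l3 \<cdot> \<sigma>3) q' \<longrightarrow> NF R (subt_at (l3 \<cdot> \<sigma>3) q')"
  shows "(replace_at s p (replace_at (l \<cdot> \<sigma>) q (r3 \<cdot> \<sigma>3)), replace_at s p (r \<cdot> \<sigma>)) \<in> rstep (PP R E) \<or>
    (\<exists>\<sigma>'. (replace_at s p (replace_at (l \<cdot> \<sigma>) q (r3 \<cdot> \<sigma>3)), replace_at s p (l \<cdot> \<sigma>')) \<in> (rstep R)\<^sup>* \<and>
          (replace_at s p (r \<cdot> \<sigma>), replace_at s p (r \<cdot> \<sigma>')) \<in> (rstep R)\<^sup>*)"
proof -
  from pos_subst_cases[OF q(1)] show ?thesis
  proof
    assume "is_pos l q \<and> (\<exists>f ts. subt_at l q = Fun f ts)"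
    then obtain f ts where lq: "is_pos l q" "subt_at l q = Fun f ts" by blast
    from cp_inst[OF rho lq(1) q(2) lq(2) l3 nf] obtain t' s' u' \<gamma> where
      c: "prime_peak R R E t' q s' u'" "t' \<cdot> \<gamma> = replace_at (l \<cdot> \<sigma>) q (r3 \<cdot> \<sigma>3)" "u' \<cdot> \<gamma> = r \<cdot> \<sigma>" by blast
    then have "(t', u') \<in> PP R E" by (auto simp: PP_def)
    from rstep_root[OF this, of \<gamma>] c have "(replace_at (l \<cdot> \<sigma>) q (r3 \<cdot> \<sigma>3), r \<cdot> \<sigma>) \<in> rstep (PP R E)" by simp
    from rstep_ctxt[OF this sp(1)] show ?thesis by blast
  next
    assume "\<exists>q1 q2 x. q = q1 @ q2 \<and> is_pos l q1 \<and> subt_at l q1 = Var x \<and> is_pos (\<sigma> x) q2"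
    then obtain q1 q2 x where qq: "q = q1 @ q2" "is_pos l q1" "subt_at l q1 = Var x" "is_pos (\<sigma> x) q2" by blast
    have s1: "subt_at (l \<cdot> \<sigma>) q1 = \<sigma> x" using subt_subst[OF qq(2)] qq(3) by simp
    have p1: "is_pos (l \<cdot> \<sigma>) q1" using is_pos_subst[OF qq(2)] .
    define a where "a = replace_at (\<sigma> x) q2 (r3 \<cdot> \<sigma>3)"
    have "subt_at (\<sigma> x) q2 = l3 \<cdot> \<sigma>3" using l3(2) qq(1) subt_at_append[OF p1] s1 by simp
    then have "(\<sigma> x, a) \<in> rstep_at R q2" unfolding rstep_at_def a_def using l3(1) qq(4) by blast
    then have xa: "(\<sigma> x, a) \<in> rstep R" unfolding rstep_def by blast
    have eq: "replace_at (l \<cdot> \<sigma>) q (r3 \<cdot> \<sigma>3) = replace_at (l \<cdot> \<sigma>) q1 a"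
      using qq(1) replace_at_append[OF p1] s1 by (simp add: a_def)
    have "(replace_at (l \<cdot> \<sigma>) q1 a, l \<cdot> (\<sigma>(x := a))) \<in> (rstep R)\<^sup>*"
      using replace_var_rsteps[OF qq(2,3)] xa by blast
    from rsteps_ctxt[OF this sp(1)] eq
    have 1: "(replace_at s p (replace_at (l \<cdot> \<sigma>) q (r3 \<cdot> \<sigma>3)), replace_at s p (l \<cdot> (\<sigma>(x := a)))) \<in> (rstep R)\<^sup>*"
      by simp
    have "(r \<cdot> \<sigma>, r \<cdot> (\<sigma>(x := a))) \<in> (rstep R)\<^sup>*"
      by (rule rsteps_subst_var) (use xa in auto)
    from rsteps_ctxt[OF this sp(1)] 1 show ?thesis by blast
  qed
qed

lemma rstep_mono: "E \<subseteq> E' \<Longrightarrow> rstep E \<subseteq> rstep E'"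
  unfolding rstep_def rstep_at_def by blast

lemma rstep_inv: "(a, b) \<in> rstep (E\<inverse>) \<Longrightarrow> (b, a) \<in> rstep E"
proof -
  assume "(a, b) \<in> rstep (E\<inverse>)"
  then obtain p l r \<sigma> where lr: "(r, l) \<in> E" "is_pos a p" "subt_at a p = l \<cdot> \<sigma>"
    "b = replace_at a p (r \<cdot> \<sigma>)" unfolding rstep_def rstep_at_def by blast
  have "(b, a) \<in> rstep_at E p" unfolding rstep_at_def using lr
    by (intro CollectI case_prodI exI[of _ r] exI[of _ l] exI[of _ \<sigma>])
      (auto simp: is_pos_replace subt_replace replace_replace replace_subt[OF lr(2), unfolded lr(3)])
  then show ?thesis unfolding rstep_def by blast
qed

lemma Bpm_simB: "(a, b) \<in> rstep (Bpm B) \<Longrightarrow> (a, b) \<in> simB B"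
proof -
  assume "(a, b) \<in> rstep (Bpm B)"
  have "rstep (B \<union> B\<inverse>) = rstep B \<union> rstep (B\<inverse>)" unfolding rstep_def rstep_at_def by blast
  with \<open>(a, b) \<in> rstep (Bpm B)\<close> have "(a, b) \<in> conv_step B"
    unfolding Bpm_def conv_step_def using rstep_inv by blast
  then show ?thesis unfolding simB_def by blast
qed

lemma tri_R:
  fixes R :: "('f, 'v :: infinite) trm rel"
  assumes rho: "\<exists>\<rho>\<in>R. variant \<rho> (l, r)"
  and sp: "is_pos s p" "subt_at s p = l \<cdot> \<sigma>"
  and q: "is_pos (l \<cdot> \<sigma>) q" "q \<noteq> []"
  and l3: "(l3, r3) \<in> R" "subt_at (l \<cdot> \<sigma>) q = l3 \<cdot> \<sigma>3"
  and nf: "\<forall>q'. q' \<noteq> [] \<and> is_pos (l3 \<cdot> \<sigma>3) q' \<longrightarrow> NF R (subt_at (l3 \<cdot> \<sigma>3) q')"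
  shows "(replace_at s p (replace_at (l \<cdot> \<sigma>) q (r3 \<cdot> \<sigma>3)), replace_at s p (r \<cdot> \<sigma>)) \<in> join R \<or>
    (replace_at s p (replace_at (l \<cdot> \<sigma>) q (r3 \<cdot> \<sigma>3)), replace_at s p (r \<cdot> \<sigma>)) \<in> conv_step (PCP R)"
  using outer[OF assms]
proof
  assume "(replace_at s p (replace_at (l \<cdot> \<sigma>) q (r3 \<cdot> \<sigma>3)), replace_at s p (r \<cdot> \<sigma>)) \<in> rstep (PP R R)"
  then show ?thesis by (auto simp: conv_step_def PP_def PCP_def)
next
  assume "\<exists>\<sigma>'. (replace_at s p (replace_at (l \<cdot> \<sigma>) q (r3 \<cdot> \<sigma>3)), replace_at s p (l \<cdot> \<sigma>')) \<in> (rstep R)\<^sup>* \<and>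
          (replace_at s p (r \<cdot> \<sigma>), replace_at s p (r \<cdot> \<sigma>')) \<in> (rstep R)\<^sup>*"
  then obtain \<sigma>' where a: "(replace_at s p (replace_at (l \<cdot> \<sigma>) q (r3 \<cdot> \<sigma>3)), replace_at s p (l \<cdot> \<sigma>')) \<in> (rstep R)\<^sup>*"
    "(replace_at s p (r \<cdot> \<sigma>), replace_at s p (r \<cdot> \<sigma>')) \<in> (rstep R)\<^sup>*" by blast
  from rho obtain \<rho> where "\<rho> \<in> R" "variant \<rho> (l, r)" by blast
  from rstep_ctxt[OF rstep_variant[OF this, of \<sigma>'] sp(1)]
  have "(replace_at s p (l \<cdot> \<sigma>'), replace_at s p (r \<cdot> \<sigma>')) \<in> rstep R" .
  with a show ?thesis unfolding join_def by (meson relcomp.relcompI converseI rtrancl.rtrancl_into_rtrancl)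
qed

lemma tri_B:
  fixes R B :: "('f, 'v :: infinite) trm rel"
  assumes rho: "\<exists>\<rho>\<in>Bpm B. variant \<rho> (l, r)"
  and sp: "is_pos s p" "subt_at s p = l \<cdot> \<sigma>"
  and q: "is_pos (l \<cdot> \<sigma>) q" "q \<noteq> []"
  and l3: "(l3, r3) \<in> R" "subt_at (l \<cdot> \<sigma>) q = l3 \<cdot> \<sigma>3"
  and nf: "\<forall>q'. q' \<noteq> [] \<and> is_pos (l3 \<cdot> \<sigma>3) q' \<longrightarrow> NF R (subt_at (l3 \<cdot> \<sigma>3) q')"
  shows "(replace_at s p (replace_at (l \<cdot> \<sigma>) q (r3 \<cdot> \<sigma>3)), replace_at s p (r \<cdot> \<sigma>)) \<in> join_sim R B \<or>
    (replace_at s p (replace_at (l \<cdot> \<sigma>) q (r3 \<cdot> \<sigma>3)), replace_at s p (r \<cdot> \<sigma>)) \<in> conv_step (PCPpm R B)"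
  using outer[OF assms]
proof
  assume "(replace_at s p (replace_at (l \<cdot> \<sigma>) q (r3 \<cdot> \<sigma>3)), replace_at s p (r \<cdot> \<sigma>)) \<in> rstep (PP R (Bpm B))"
  moreover have "PP R (Bpm B) \<subseteq> PCPpm R B" by (auto simp: PP_def PCPpm_def)
  ultimately show ?thesis using rstep_mono by (auto simp: conv_step_def)
next
  assume "\<exists>\<sigma>'. (replace_at s p (replace_at (l \<cdot> \<sigma>) q (r3 \<cdot> \<sigma>3)), replace_at s p (l \<cdot> \<sigma>')) \<in> (rstep R)\<^sup>* \<and>
          (replace_at s p (r \<cdot> \<sigma>), replace_at s p (r \<cdot> \<sigma>')) \<in> (rstep R)\<^sup>*"
  then obtain \<sigma>' where a: "(replace_at s p (replace_at (l \<cdot> \<sigma>) q (r3 \<cdot> \<sigma>3)), replace_at s p (l \<cdot> \<sigma>')) \<in> (rstep R)\<^sup>*"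
    "(replace_at s p (r \<cdot> \<sigma>), replace_at s p (r \<cdot> \<sigma>')) \<in> (rstep R)\<^sup>*" by blast
  from rho obtain \<rho> where "\<rho> \<in> Bpm B" "variant \<rho> (l, r)" by blast
  from rstep_ctxt[OF rstep_variant[OF this, of \<sigma>'] sp(1)]
  have "(replace_at s p (l \<cdot> \<sigma>'), replace_at s p (r \<cdot> \<sigma>')) \<in> simB B" by (rule Bpm_simB)
  with a show ?thesis unfolding join_sim_def by blast
qed



lemma peak_setup:
  assumes "crit_peak E1 E2 t p s u"
  obtains l1 r1 l2 r2 \<sigma> where "\<exists>\<rho>\<in>E1. variant \<rho> (l1, r1)" "\<exists>\<rho>\<in>E2. variant \<rho> (l2, r2)"
    "is_pos s p" "subt_at s p = l1 \<cdot> \<sigma>" "s = l2 \<cdot> \<sigma>" "t = replace_at s p (r1 \<cdot> \<sigma>)" "u = r2 \<cdot> \<sigma>"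
proof -
  from assms obtain l1 r1 l2 r2 \<sigma> where c: "overlap E1 E2 (l1, r1) p (l2, r2)" "is_mgu \<sigma> l1 (subt_at l2 p)"
     "s = l2 \<cdot> \<sigma>" "t = replace_at (l2 \<cdot> \<sigma>) p (r1 \<cdot> \<sigma>)" "u = r2 \<cdot> \<sigma>" unfolding crit_peak_def by blast
  from c(1) have o: "\<exists>\<rho>\<in>E1. variant \<rho> (l1, r1)" "\<exists>\<rho>\<in>E2. variant \<rho> (l2, r2)" "is_pos l2 p"
    unfolding overlap_def by auto
  have "is_pos s p" using c(3) is_pos_subst[OF o(3)] by simp
  moreover have "subt_at s p = l1 \<cdot> \<sigma>" using c(2,3) subt_subst[OF o(3)] by (simp add: is_mgu_def unifies_def)
  ultimately show ?thesis using that o c by blast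
qed

lemma nonprime:
  assumes "\<not> (\<forall>q. q \<noteq> [] \<and> is_pos (subt_at s p) q \<longrightarrow> NF R (subt_at (subt_at s p) q))"
  obtains q l3 r3 \<sigma>3 where "is_pos (subt_at s p) q" "q \<noteq> []" "(l3, r3) \<in> R" "subt_at (subt_at s p) q = l3 \<cdot> \<sigma>3"
    "\<forall>q'. q' \<noteq> [] \<and> is_pos (l3 \<cdot> \<sigma>3) q' \<longrightarrow> NF R (subt_at (l3 \<cdot> \<sigma>3) q')"
proof -
  from assms obtain q' w where q': "q' \<noteq> []" "is_pos (subt_at s p) q'" "(subt_at (subt_at s p) q', w) \<in> rstep R"
    unfolding NF_def by blast
  from innermost[OF q'(3)] obtain q l3 r3 \<sigma>3 where r: "is_pos (subt_at (subt_at s p) q') q" "(l3, r3) \<in> R"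
    "subt_at (subt_at (subt_at s p) q') q = l3 \<cdot> \<sigma>3"
    "\<forall>q'. q' \<noteq> [] \<and> is_pos (l3 \<cdot> \<sigma>3) q' \<longrightarrow> NF R (subt_at (l3 \<cdot> \<sigma>3) q')" by blast
  show ?thesis
    by (rule that[of "q' @ q"]) (use q' r in \<open>auto simp: is_pos_append subt_at_append\<close>)
qed

lemma step_inner: assumes "is_pos a q" "(l3, r3) \<in> R" "subt_at a q = l3 \<cdot> \<sigma>3"
  shows "(a, replace_at a q (r3 \<cdot> \<sigma>3)) \<in> rstep R"
  using rstep_ctxt[OF rstep_root[OF assms(2)] assms(1)] replace_subt[OF assms(1)] assms(3)
  by (metis replace_subt)

lemma join_sym: "(a, b) \<in> join R \<Longrightarrow> (b, a) \<in> join R" unfolding join_def by blast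
lemma conv_sym: "(a, b) \<in> conv_step R \<Longrightarrow> (b, a) \<in> conv_step R" unfolding conv_step_def by blast
lemma join_refl: "(a, a) \<in> join R" unfolding join_def by blast

lemma pair_conv: "(t, u) \<in> P \<Longrightarrow> (t, u) \<in> conv_step P"
  using rstep_root[of t u P Var] unfolding conv_step_def by simp

theorem lemma3p14:
  fixes R B :: "('f, 'v :: infinite) trm rel"
  assumes "trs R" and "left_linear R"
    and "\<forall>(l, r) \<in> B. vars l = vars r"
  shows "(crit_peak R (Bpm B) t p s u \<longrightarrow> (\<exists>v. nabla R t s v \<and> nabla_tilde R B v s u)) \<and>
         (crit_peak (Bpm B) R t p s u \<longrightarrow> (\<exists>v. nabla_tilde R B v s t \<and> nabla R v s u))"
proof (intro conjI impI)
  assume cp: "crit_peak R (Bpm B) t p s u"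
  then obtain l1 r1 l2 r2 \<sigma> where c: "\<exists>\<rho>\<in>R. variant \<rho> (l1, r1)" "\<exists>\<rho>\<in>Bpm B. variant \<rho> (l2, r2)"
    "is_pos s p" "subt_at s p = l1 \<cdot> \<sigma>" "s = l2 \<cdot> \<sigma>" "t = replace_at s p (r1 \<cdot> \<sigma>)" "u = r2 \<cdot> \<sigma>"
    by (rule peak_setup)
  have st: "(s, t) \<in> rstep R"
  proof -
    from c(1) obtain \<rho> where "\<rho> \<in> R" "variant \<rho> (l1, r1)" by blast
    from rstep_ctxt[OF rstep_variant[OF this, of \<sigma>] c(3)]
    show ?thesis unfolding c(4)[symmetric] replace_subt[OF c(3)] c(6) .
  qed
  have su: "(s, u) \<in> simB B" using c(2,5,7) rstep_variant Bpm_simB by blast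
  show "\<exists>v. nabla R t s v \<and> nabla_tilde R B v s u"
  proof (cases "\<forall>q. q \<noteq> [] \<and> is_pos (subt_at s p) q \<longrightarrow> NF R (subt_at (subt_at s p) q)")
    case True
    then have "(t, u) \<in> PCPpm R B" using cp by (auto simp: PCPpm_def prime_peak_def)
    then have "(t, u) \<in> conv_step (PCPpm R B)" by (rule pair_conv)
    then show ?thesis using st su join_refl unfolding nabla_def nabla_tilde_def by blast
  next
    case False
    obtain q l3 r3 \<sigma>3 where q: "is_pos (l1 \<cdot> \<sigma>) q" "q \<noteq> []" "(l3, r3) \<in> R"
      "subt_at (l1 \<cdot> \<sigma>) q = l3 \<cdot> \<sigma>3" "\<forall>q'. q' \<noteq> [] \<and> is_pos (l3 \<cdot> \<sigma>3) q' \<longrightarrow> NF R (subt_at (l3 \<cdot> \<sigma>3) q')"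
      by (rule nonprime[OF False, unfolded c(4)])
    define v where "v = replace_at s p (replace_at (l1 \<cdot> \<sigma>) q (r3 \<cdot> \<sigma>3))"
    have sv: "(s, v) \<in> rstep R"
      using rstep_ctxt[OF step_inner[OF q(1,3,4)] c(3)] replace_subt[OF c(3)] c(4) by (simp add: v_def)
    have t1: "(v, t) \<in> join R \<or> (v, t) \<in> conv_step (PCP R)"
      using tri_R[OF c(1) c(3,4) q] c(6) by (simp add: v_def)
    have pq: "is_pos (l2 \<cdot> \<sigma>) (p @ q)" "subt_at (l2 \<cdot> \<sigma>) (p @ q) = l3 \<cdot> \<sigma>3"
      "v = replace_at (l2 \<cdot> \<sigma>) (p @ q) (r3 \<cdot> \<sigma>3)"
      using c(3,4,5) q by (auto simp: is_pos_append subt_at_append replace_at_append v_def)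
    have s0: "is_pos s []" "subt_at s [] = l2 \<cdot> \<sigma>" using c(5) by simp_all
    have pqne: "p @ q \<noteq> []" using q(2) by simp
    have t2: "(v, u) \<in> join_sim R B \<or> (v, u) \<in> conv_step (PCPpm R B)"
      using tri_B[OF c(2) s0 pq(1) pqne q(3) pq(2) q(5)]
      unfolding replace_at.simps(1) by (simp only: pq(3) c(7))
    show ?thesis unfolding nabla_def nabla_tilde_def
      using st sv su t1 t2 join_sym[of v t R] conv_sym[of v t "PCP R"] by blast
  qed
next
  assume cp: "crit_peak (Bpm B) R t p s u"
  then obtain l1 r1 l2 r2 \<sigma> where c: "\<exists>\<rho>\<in>Bpm B. variant \<rho> (l1, r1)" "\<exists>\<rho>\<in>R. variant \<rho> (l2, r2)"
    "is_pos s p" "subt_at s p = l1 \<cdot> \<sigma>" "s = l2 \<cdot> \<sigma>" "t = replace_at s p (r1 \<cdot> \<sigma>)" "u = r2 \<cdot> \<sigma>"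
    by (rule peak_setup)
  have st: "(s, t) \<in> simB B"
  proof -
    from c(1) obtain \<rho> where "\<rho> \<in> Bpm B" "variant \<rho> (l1, r1)" by blast
    from rstep_ctxt[OF rstep_variant[OF this, of \<sigma>] c(3)]
    show ?thesis unfolding c(4)[symmetric] replace_subt[OF c(3)] c(6) by (rule Bpm_simB)
  qed
  have su: "(s, u) \<in> rstep R" using c(2,5,7) rstep_variant by blast
  show "\<exists>v. nabla_tilde R B v s t \<and> nabla R v s u"
  proof (cases "\<forall>q. q \<noteq> [] \<and> is_pos (subt_at s p) q \<longrightarrow> NF R (subt_at (subt_at s p) q)")
    case True
    then have "(t, u) \<in> PCPpm R B" using cp by (auto simp: PCPpm_def prime_peak_def)
    then have "(u, t) \<in> conv_step (PCPpm R B)" by (rule conv_sym[OF pair_conv])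
    then show ?thesis using st su join_refl unfolding nabla_def nabla_tilde_def by blast
  next
    case False
    obtain q l3 r3 \<sigma>3 where q: "is_pos (l1 \<cdot> \<sigma>) q" "q \<noteq> []" "(l3, r3) \<in> R"
      "subt_at (l1 \<cdot> \<sigma>) q = l3 \<cdot> \<sigma>3" "\<forall>q'. q' \<noteq> [] \<and> is_pos (l3 \<cdot> \<sigma>3) q' \<longrightarrow> NF R (subt_at (l3 \<cdot> \<sigma>3) q')"
      by (rule nonprime[OF False, unfolded c(4)])
    define v where "v = replace_at s p (replace_at (l1 \<cdot> \<sigma>) q (r3 \<cdot> \<sigma>3))"
    have sv: "(s, v) \<in> rstep R"
      using rstep_ctxt[OF step_inner[OF q(1,3,4)] c(3)] replace_subt[OF c(3)] c(4) by (simp add: v_def)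
    have t1: "(v, t) \<in> join_sim R B \<or> (v, t) \<in> conv_step (PCPpm R B)"
      using tri_B[OF c(1) c(3,4) q] c(6) by (simp add: v_def)
    have pq: "is_pos (l2 \<cdot> \<sigma>) (p @ q)" "subt_at (l2 \<cdot> \<sigma>) (p @ q) = l3 \<cdot> \<sigma>3"
      "v = replace_at (l2 \<cdot> \<sigma>) (p @ q) (r3 \<cdot> \<sigma>3)"
      using c(3,4,5) q by (auto simp: is_pos_append subt_at_append replace_at_append v_def)
    have s0: "is_pos s []" "subt_at s [] = l2 \<cdot> \<sigma>" using c(5) by simp_all
    have pqne: "p @ q \<noteq> []" using q(2) by simp
    have t2: "(v, u) \<in> join R \<or> (v, u) \<in> conv_step (PCP R)"
      using tri_R[OF c(2) s0 pq(1) pqne q(3) pq(2) q(5)]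
      unfolding replace_at.simps(1) by (simp only: pq(3) c(7))
    show ?thesis unfolding nabla_def nabla_tilde_def
      using st sv su t1 t2 by blast
  qed
qed

end
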